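(* Let $\mathcal F$ be a family of finite graphs and let $\mathrm{Forb}^+_{T_{\mathrm{Graph}}}(\mathcal F)$ be the theory of all graphs that contain no non-induced copy of any member of $\mathcal F$. For the axiom-adding interpretation $I^+_{\mathcal F}\colon T_{\mathrm{Graph}}\leadsto\mathrm{Forb}^+_{T_{\mathrm{Graph}}}(\mathcal F)$ (acting identically on $E$), we have $$\chi(I^+_{\mathcal F})=\max\{\chi(\mathcal F),1\},$$ where $\chi(\mathcal F)=\inf\{\chi(F):F\in\mathcal F\}$ (the infimum of the usual chromatic numbers, $\inf\varnothing=\infty$).
   Context: A graph $G$ contains a non-induced copy of $F$ ($F\subseteq G$) if there is an injection $V(F)\to V(G)$ mapping edges to edges. For the interpretation $I=I^+_{\mathcal F}$ and $T=\mathrm{Forb}^+_{T_{\mathrm{Graph}}}(\mathcal F)$, $I(N)=N$ and the abstract chromatic number is $\chi(I)=\sup(\{\ell\in\mathbb{N}_+:\forall n\in\mathbb{N}\ \exists N\in\mathcal M_n[T],\ T_{n,\ell}\subseteq I(N)\}\cup\{0\})+1$, where $\mathcal M_n[T]$ is the set of $n$-vertex models of $T$ up to isomorphism and $T_{n,\ell}$ is the complete $\ell$-partite graph on $n$ vertices with parts of sizes $\lfloor n/\ell\rfloor$ or $\lceil n/\ell\rceil$. *)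

theory Defs
  imports Main "HOL-Library.Extended_Nat"
begin

text \<open>A finite (simple) graph is represented up to isomorphism as a pair (n, E):
  vertex set {0..<n}, edge relation E symmetric, irreflexive and supported on {0..<n}.\<close>
type_synonym graph = "nat \<times> (nat \<Rightarrow> nat \<Rightarrow> bool)"

definition is_graph :: "graph \<Rightarrow> bool" where
  "is_graph G = ((\<forall>i j. snd G i j \<longrightarrow> i < fst G \<and> j < fst G \<and> i \<noteq> j)
                 \<and> (\<forall>i j. snd G i j \<longrightarrow> snd G j i))"

definition subgraph :: "graph \<Rightarrow> graph \<Rightarrow> bool" where
  "subgraph F G = (\<exists>f. inj_on f {0..<fst F} \<and> f ` {0..<fst F} \<subseteq> {0..<fst G}
                      \<and> (\<forall>i j. snd F i j \<longrightarrow> snd G (f i) (f j)))"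

definition forb_model :: "graph set \<Rightarrow> graph \<Rightarrow> bool" where
  "forb_model \<F> G = (is_graph G \<and> (\<forall>F\<in>\<F>. \<not> subgraph F G))"

definition is_turan :: "graph \<Rightarrow> nat \<Rightarrow> nat \<Rightarrow> bool" where
  "is_turan T n l = (fst T = n \<and>
     (\<exists>p. (\<forall>i<n. p i < l)
        \<and> (\<forall>k<l. card {i. i < n \<and> p i = k} \<in> {n div l, nat \<lceil>real n / real l\<rceil>})
        \<and> (\<forall>i j. snd T i j = (i < n \<and> j < n \<and> p i \<noteq> p j))))"

definition chromatic_number :: "graph \<Rightarrow> nat" where
  "chromatic_number G = (LEAST k. \<exists>c. (\<forall>i<fst G. c i < k) \<and> (\<forall>i j. snd G i j \<longrightarrow> c i \<noteq> c j))"

definition family_chi :: "graph set \<Rightarrow> enat" where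
  "family_chi \<F> = (INF F\<in>\<F>. enat (chromatic_number F))"

text \<open>Abstract chromatic number of I^+_\<F> (with I(N) = N).\<close>
definition abstract_chi :: "graph set \<Rightarrow> enat" where
  "abstract_chi \<F> = Sup ({enat l | l. l > 0 \<and>
      (\<forall>n. \<exists>N. fst N = n \<and> forb_model \<F> N \<and> (\<exists>T. is_turan T n l \<and> subgraph T N))} \<union> {0}) + 1"

end

theory Submission
  imports Defs
begin

lemma part_card:
  assumes l: "l > 0" and k: "k < l"
  shows "card {i. i < n \<and> i mod l = k} = n div l + (if k < n mod l then 1 else 0)"
proof (induction n)
  case 0 then show ?case by simp
next
  case (Suc n)
  have "{i. i < Suc n \<and> i mod l = k} = {i. i < n \<and> i mod l = k} \<union> (if n mod l = k then {n} else {})"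
    by (auto simp: less_Suc_eq)
  hence "card {i. i < Suc n \<and> i mod l = k} = card {i. i < n \<and> i mod l = k} + (if n mod l = k then 1 else 0)"
    by auto
  also have "\<dots> = Suc n div l + (if k < Suc n mod l then 1 else 0)"
    using Suc.IH k l mod_less_divisor[OF l, of n]
    by (auto simp: div_Suc mod_Suc)
  finally show ?case .
qed

lemma ceil_div:
  assumes l: "l > 0"
  shows "nat \<lceil>real n / real l\<rceil> = n div l + (if n mod l = 0 then 0 else 1)"
proof -
  have n: "real n = real (n div l) * real l + real (n mod l)"
    by (metis div_mult_mod_eq of_nat_add of_nat_mult)
  have eq: "real n / real l = real (n div l) + real (n mod l) / real l"
    using l by (simp add: n field_simps)
  have r: "real (n mod l) < real l" using l by simp
  show ?thesis
  proof (cases "n mod l = 0")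
    case True
    then show ?thesis using eq by simp
  next
    case False
    have "\<lceil>real n / real l\<rceil> = int (n div l) + 1"
    proof (rule ceiling_unique)
      have "0 < real (n mod l) / real l" using False l by simp
      thus "of_int (int (n div l) + 1) - 1 < real n / real l" using eq by simp
      have "real (n mod l) / real l \<le> 1" using r l by simp
      thus "real n / real l \<le> of_int (int (n div l) + 1)" using eq by simp
    qed
    then show ?thesis using False by simp
  qed
qed

lemma turan_exists:
  assumes l: "l > 0"
  shows "is_turan (n, \<lambda>i j. i < n \<and> j < n \<and> i mod l \<noteq> j mod l) n l"
  unfolding is_turan_def
proof (intro conjI exI[of _ "\<lambda>i. i mod l"] allI impI)
  fix k assume k: "k < l"
  show "card {i. i < n \<and> i mod l = k} \<in> {n div l, nat \<lceil>real n / real l\<rceil>}"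
    using part_card[OF l k, of n] ceil_div[OF l, of n] by auto
qed (use l in auto)

lemma chrom_col:
  assumes "is_graph F"
  shows "\<exists>c. (\<forall>i<fst F. c i < chromatic_number F) \<and> (\<forall>i j. snd F i j \<longrightarrow> c i \<noteq> c j)"
proof -
  have "\<exists>(k::nat) (c::nat\<Rightarrow>nat). (\<forall>i<fst F. c i < k) \<and> (\<forall>i j. snd F i j \<longrightarrow> c i \<noteq> c j)"
  proof -
    have h: "(\<forall>i<fst F. (\<lambda>i. i) i < fst F) \<and> (\<forall>i j. snd F i j \<longrightarrow> (\<lambda>i::nat. i) i \<noteq> (\<lambda>i. i) j)"
      using assms unfolding is_graph_def by auto
    show ?thesis
      apply (rule exI[of _ "fst F"])
      apply (rule exI[of _ "\<lambda>i::nat. i"])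
      using h by simp
  qed
  thus ?thesis unfolding chromatic_number_def
    by (rule LeastI_ex[where P="\<lambda>k. \<exists>c. (\<forall>i<fst F. c i < k) \<and> (\<forall>i j. snd F i j \<longrightarrow> c i \<noteq> c j)"])
qed

lemma chrom_le:
  assumes "\<forall>i<fst F. c i < k" "\<forall>i j. snd F i j \<longrightarrow> c i \<noteq> c j"
  shows "chromatic_number F \<le> k"
  unfolding chromatic_number_def using assms by (intro Least_le) blast

lemma subgraph_trans:
  assumes "subgraph A B" "subgraph B C" shows "subgraph A C"
proof -
  obtain f where f: "inj_on f {0..<fst A}" "f ` {0..<fst A} \<subseteq> {0..<fst B}"
    "\<forall>i j. snd A i j \<longrightarrow> snd B (f i) (f j)" using assms(1) unfolding subgraph_def by blast
  obtain g where g: "inj_on g {0..<fst B}" "g ` {0..<fst B} \<subseteq> {0..<fst C}"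
    "\<forall>i j. snd B i j \<longrightarrow> snd C (g i) (g j)" using assms(2) unfolding subgraph_def by blast
  show ?thesis unfolding subgraph_def
  proof (intro exI[of _ "g \<circ> f"] conjI)
    show "inj_on (g \<circ> f) {0..<fst A}" using f g by (meson comp_inj_on inj_on_subset)
    show "(g \<circ> f) ` {0..<fst A} \<subseteq> {0..<fst C}" using f(2) g(2) by (auto simp: image_subset_iff)
    show "\<forall>i j. snd A i j \<longrightarrow> snd C ((g \<circ> f) i) ((g \<circ> f) j)" using f(3) g(3) by simp
  qed
qed

lemma dirA:
  assumes G: "\<forall>F\<in>\<F>. is_graph F" and l: "l > 0"
    and P: "\<forall>n. \<exists>N. fst N = n \<and> forb_model \<F> N \<and> (\<exists>T. is_turan T n l \<and> subgraph T N)"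
    and F: "F \<in> \<F>"
  shows "l < chromatic_number F"
proof (rule ccontr)
  assume "\<not> l < chromatic_number F"
  hence cl: "chromatic_number F \<le> l" by simp
  obtain c where c: "\<forall>i<fst F. c i < l" "\<forall>i j. snd F i j \<longrightarrow> c i \<noteq> c j"
  proof -
    obtain c where "(\<forall>i<fst F. c i < chromatic_number F) \<and> (\<forall>i j. snd F i j \<longrightarrow> c i \<noteq> c j)"
      using chrom_col[of F] G F by blast
    thus ?thesis using that cl by (meson order_less_le_trans)
  qed
  define m where "m = fst F"
  obtain N T where N: "forb_model \<F> N" "is_turan T (m*l) l" "subgraph T N"
    using P by blast
  obtain p where p: "\<forall>i<m*l. p i < l"
    "\<forall>k<l. card {i. i < m*l \<and> p i = k} \<in> {m*l div l, nat \<lceil>real (m*l) / real l\<rceil>}"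
    "\<forall>i j. snd T i j = (i < m*l \<and> j < m*l \<and> p i \<noteq> p j)" "fst T = m*l"
    using N(2) unfolding is_turan_def by blast
  have cd: "card {i. i < m*l \<and> p i = k} = m" if "k < l" for k
  proof -
    have "real (m*l) / real l = real m" using l by simp
    moreover have "m*l div l = m" using l by simp
    ultimately show ?thesis using p(2) that by simp
  qed
  have "\<exists>h. k < l \<longrightarrow> bij_betw h {0..<m} {i. i < m*l \<and> p i = k}" for k
  proof (cases "k < l")
    case True
    have fin: "finite {i. i < m*l \<and> p i = k}" by simp
    show ?thesis using ex_bij_betw_nat_finite[OF fin] cd[OF True] by auto
  qed simp
  then obtain H where H0: "\<And>k. k < l \<longrightarrow> bij_betw (H k) {0..<m} {i. i < m*l \<and> p i = k}"
    by metis
  have H: "bij_betw (H k) {0..<m} {i. i < m*l \<and> p i = k}" if "k < l" for k using H0 that by blast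
  define f where "f i = H (c i) i" for i
  have fi: "f i < m*l \<and> p (f i) = c i" if "i < m" for i
    using H[of "c i"] c(1) that unfolding f_def m_def bij_betw_def by auto
  have "subgraph F T" unfolding subgraph_def
  proof (intro exI[of _ f] conjI allI impI)
    show "inj_on f {0..<fst F}"
    proof (rule inj_onI)
      fix x y assume xy: "x \<in> {0..<fst F}" "y \<in> {0..<fst F}" "f x = f y"
      hence "x < m" "y < m" using m_def by auto
      hence "c x = c y" using fi[of x] fi[of y] xy(3) by simp
      thus "x = y" using xy H[of "c x"] c(1) unfolding f_def bij_betw_def inj_on_def m_def by auto
    qed
    show "f ` {0..<fst F} \<subseteq> {0..<fst T}" using fi p(4) m_def by auto
    fix i j assume e: "snd F i j"
    hence "i < m" "j < m" using G F unfolding is_graph_def m_def by auto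
    thus "snd T (f i) (f j)" using fi p(3) c(2) e by auto
  qed
  hence "subgraph F N" using N(3) subgraph_trans by blast
  thus False using N(1) F unfolding forb_model_def by blast
qed

lemma dirB:
  assumes G: "\<forall>F\<in>\<F>. is_graph F" and l: "l > 0"
    and C: "\<forall>F\<in>\<F>. l < chromatic_number F"
  shows "\<forall>n. \<exists>N. fst N = n \<and> forb_model \<F> N \<and> (\<exists>T. is_turan T n l \<and> subgraph T N)"
proof
  fix n
  define T where "T = (n, \<lambda>i j. i < n \<and> j < n \<and> i mod l \<noteq> j mod l)"
  have tur: "is_turan T n l" using turan_exists[OF l] T_def by simp
  have refl: "subgraph T T" unfolding subgraph_def by (intro exI[of _ id]) auto
  have fm: "forb_model \<F> T" unfolding forb_model_def
  proof
    show "is_graph T" unfolding is_graph_def T_def by auto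
    show "\<forall>F\<in>\<F>. \<not> subgraph F T"
    proof (intro ballI notI)
      fix F assume F: "F \<in> \<F>" and s: "subgraph F T"
      obtain f where f: "f ` {0..<fst F} \<subseteq> {0..<fst T}"
        "\<forall>i j. snd F i j \<longrightarrow> snd T (f i) (f j)" using s unfolding subgraph_def by blast
      have "chromatic_number F \<le> l"
      proof (rule chrom_le[of F "\<lambda>i. f i mod l"])
        show "\<forall>i<fst F. f i mod l < l" using l by simp
        show "\<forall>i j. snd F i j \<longrightarrow> f i mod l \<noteq> f j mod l" using f(2) T_def by auto
      qed
      thus False using C F by fastforce
    qed
  qed
  show "\<exists>N. fst N = n \<and> forb_model \<F> N \<and> (\<exists>T. is_turan T n l \<and> subgraph T N)"
    using fm tur refl T_def by (intro exI[of _ T]) auto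
qed

theorem proposition8p1:
  fixes \<F> :: "graph set"
  assumes "\<forall>F\<in>\<F>. is_graph F"
  shows "abstract_chi \<F> = max (family_chi \<F>) 1"
proof -
  define c where "c = family_chi \<F>"
  have iff: "(l > 0 \<and> (\<forall>n. \<exists>N. fst N = n \<and> forb_model \<F> N \<and> (\<exists>T. is_turan T n l \<and> subgraph T N)))
     \<longleftrightarrow> (l > 0 \<and> enat (Suc l) \<le> c)" for l
  proof -
    have "enat (Suc l) \<le> c \<longleftrightarrow> (\<forall>F\<in>\<F>. l < chromatic_number F)"
      unfolding c_def family_chi_def le_INF_iff by (simp add: Suc_le_eq)
    thus ?thesis using dirA[OF assms, of l] dirB[OF assms, of l] by blast
  qed
  define S where "S = {enat l | l. l > 0 \<and> enat (Suc l) \<le> c} \<union> {0}"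
  have A: "abstract_chi \<F> = Sup S + 1"
    unfolding abstract_chi_def S_def
  proof -
    have "{enat l |l. 0 < l \<and> (\<forall>n. \<exists>N. fst N = n \<and> forb_model \<F> N \<and> (\<exists>T. is_turan T n l \<and> subgraph T N))}
      = {enat l | l. l > 0 \<and> enat (Suc l) \<le> c}" using iff by blast
    thus "Sup ({enat l |l. 0 < l \<and> (\<forall>n. \<exists>N. fst N = n \<and> forb_model \<F> N \<and> (\<exists>T. is_turan T n l \<and> subgraph T N))} \<union> {0}) + 1 =
    Sup ({enat l |l. 0 < l \<and> enat (Suc l) \<le> c} \<union> {0}) + 1" by simp
  qed
  have up: "Sup S + 1 \<le> max c 1"
  proof -
    have "Sup S \<le> max c 1 - 1"
    proof (rule Sup_least)
      fix y assume "y \<in> S"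
      then show "y \<le> max c 1 - 1" unfolding S_def
        by (cases c) (auto simp: one_enat_def)
    qed
    thus ?thesis by (cases "Sup S"; cases c) (auto simp: one_enat_def split: if_splits)
  qed
  have lo: "max c 1 \<le> Sup S + 1"
  proof (cases c)
    case (enat m)
    show ?thesis
    proof (cases "m \<le> 1")
      case True
      have "0 \<le> Sup S" by simp
      then show ?thesis using True enat by (cases "Sup S") (auto simp: one_enat_def)
    next
      case False
      have "enat (m - 1) \<in> S" unfolding S_def using False enat by auto
      hence "enat (m - 1) \<le> Sup S" by (rule Sup_upper)
      then show ?thesis using False enat by (cases "Sup S") (auto simp: one_enat_def)
    qed
  next
    case infinity
    have "Sup S = \<infinity>"
    proof (rule ccontr)
      assume "Sup S \<noteq> \<infinity>"
      then obtain k where k: "Sup S = enat k" by auto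
      have "enat (Suc k) \<in> S" unfolding S_def using infinity by auto
      hence "enat (Suc k) \<le> Sup S" by (rule Sup_upper)
      thus False using k by simp
    qed
    then show ?thesis by simp
  qed
  have "Sup S + 1 = max c 1" using up lo by (rule antisym)
  thus ?thesis using A c_def by simp
qed

end
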